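(* Let $T$ be a $d$-ary tree with $n$ leaves and let $1\le k<\ell\le n$. For $m\ge 1$ let $A^{(m)}$ be the tree obtained from $T$ by attaching a $d$-ary caret at the $k$-th leaf $m$ times in succession (so $A^{(1)}=T_k$, $A^{(j+1)}=(A^{(j)})_k$), and let $B^{(1)}=T_\ell$ and $B^{(j+1)}=(B^{(j)})_{\ell+j(d-1)}$. Then in $F_d$, $[T_k,T_\ell]^m=[A^{(m)},B^{(m)}]$ for every $m\in\mathbb{N}$.
   Context: Fix $d\ge 2$. A $d$-ary tree is a finite rooted tree in which each non-leaf vertex has exactly $d$ ordered children; leaves are numbered $1,\dots,n$ left to right. For $1\le k\le n(T)$, $T_k$ denotes $T$ with a $d$-ary caret (root with $d$ leaf children) attached to its $k$-th leaf. The Higman–Thompson group $F_d$ consists of classes $[T,U]$ of pairs of $d$-ary trees with the same number $n$ of leaves, under the equivalence generated by $(T,U)\sim(T_k,U_k)$ for $1\le k\le n$, with product $[T,U][U,W]=[T,W]$. *)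

theory Defs
  imports Main
begin

datatype tree = Leaf | Node "tree list"

fun leaves :: "tree \<Rightarrow> nat" where
  "leaves Leaf = 1"
| "leaves (Node ts) = sum_list (map leaves ts)"

fun dary :: "nat \<Rightarrow> tree \<Rightarrow> bool" where
  "dary d Leaf = True"
| "dary d (Node ts) = (length ts = d \<and> (\<forall>t\<in>set ts. dary d t))"

definition caret :: "nat \<Rightarrow> tree" where
  "caret d = Node (replicate d Leaf)"

text \<open>attach d k T = T_k: attach a d-ary caret to the k-th leaf (leaves numbered
  1..n from left to right).\<close>
fun attach :: "nat \<Rightarrow> nat \<Rightarrow> tree \<Rightarrow> tree"
and attach_list :: "nat \<Rightarrow> nat \<Rightarrow> tree list \<Rightarrow> tree list" where
  "attach d k Leaf = (if k = 1 then caret d else Leaf)"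
| "attach d k (Node ts) = Node (attach_list d k ts)"
| "attach_list d k [] = []"
| "attach_list d k (t # ts) =
     (if k \<le> leaves t then attach d k t # ts else t # attach_list d (k - leaves t) ts)"

definition valid_pair :: "nat \<Rightarrow> tree \<times> tree \<Rightarrow> bool" where
  "valid_pair d p = (dary d (fst p) \<and> dary d (snd p) \<and> leaves (fst p) = leaves (snd p))"

definition expand :: "nat \<Rightarrow> tree \<times> tree \<Rightarrow> tree \<times> tree \<Rightarrow> bool" where
  "expand d p q = (valid_pair d p \<and>
     (\<exists>k. 1 \<le> k \<and> k \<le> leaves (fst p) \<and> q = (attach d k (fst p), attach d k (snd p))))"

text \<open>The equivalence relation on valid pairs generated by expansions; [T,U] is the class.\<close>
definition fd_equiv :: "nat \<Rightarrow> tree \<times> tree \<Rightarrow> tree \<times> tree \<Rightarrow> bool" where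
  "fd_equiv d p q = (valid_pair d p \<and> (\<lambda>x y. expand d x y \<or> expand d y x)\<^sup>*\<^sup>* p q)"

text \<open>Product in F_d on representatives: [T,U][U,W] = [T,W], computed by choosing
  representatives of the two classes with matching middle tree.\<close>
definition fd_mult :: "nat \<Rightarrow> tree \<times> tree \<Rightarrow> tree \<times> tree \<Rightarrow> tree \<times> tree" where
  "fd_mult d p q = (SOME r. \<exists>T U W. fd_equiv d p (T, U) \<and> fd_equiv d q (U, W) \<and> r = (T, W))"

fun fd_pow :: "nat \<Rightarrow> tree \<times> tree \<Rightarrow> nat \<Rightarrow> tree \<times> tree" where
  "fd_pow d p 0 = (Leaf, Leaf)"
| "fd_pow d p (Suc m) = fd_mult d (fd_pow d p m) p"

definition A_iter :: "nat \<Rightarrow> nat \<Rightarrow> tree \<Rightarrow> nat \<Rightarrow> tree" where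
  "A_iter d k T m = (attach d k ^^ m) T"

fun B_iter :: "nat \<Rightarrow> nat \<Rightarrow> tree \<Rightarrow> nat \<Rightarrow> tree" where
  "B_iter d l T 0 = T"
| "B_iter d l T (Suc j) = (if j = 0 then attach d l T
                           else attach d (l + j * (d - 1)) (B_iter d l T j))"

end

theory Submission
  imports Defs
begin

abbreviation lvs :: "tree list \<Rightarrow> nat" where "lvs fs \<equiv> sum_list (map leaves fs)"

fun graft :: "tree \<Rightarrow> tree list \<Rightarrow> tree"
and gcomp :: "tree list \<Rightarrow> tree list \<Rightarrow> tree list" where
  "graft Leaf fs = (case fs of [] \<Rightarrow> Leaf | t # _ \<Rightarrow> t)"
| "graft (Node ts) fs = Node (gcomp ts fs)"
| "gcomp [] fs = []"
| "gcomp (t # ts) fs = graft t (take (leaves t) fs) # gcomp ts (drop (leaves t) fs)"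


lemma length_gcomp[simp]: "length (gcomp ts fs) = length ts"
  by (induction ts arbitrary: fs) auto

lemma lvs_split: "lvs fs = lvs (take n fs) + lvs (drop n fs)"
  by (metis append_take_drop_id map_append sum_list_append)

lemma leaves_graft:
  "length fs = leaves t \<Longrightarrow> leaves (graft t fs) = lvs fs"
  "length fs = lvs ts \<Longrightarrow> lvs (gcomp ts fs) = lvs fs"
proof (induction t fs and ts fs rule: graft_gcomp.induct)
  case (1 fs) then show ?case by (cases fs) auto
next
  case (4 t ts fs)
  then show ?case using lvs_split[of fs "leaves t"] by simp
qed auto

lemma dary_graft:
  "dary d t \<Longrightarrow> \<forall>x\<in>set fs. dary d x \<Longrightarrow> length fs = leaves t \<Longrightarrow> dary d (graft t fs)"
  "\<forall>x\<in>set ts. dary d x \<Longrightarrow> \<forall>x\<in>set fs. dary d x \<Longrightarrow> length fs = lvs ts \<Longrightarrow> \<forall>x\<in>set (gcomp ts fs). dary d x"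
proof (induction t fs and ts fs rule: graft_gcomp.induct)
  case (1 fs) then show ?case by (cases fs) auto
next
  case (2 ts fs) then show ?case by simp
next
  case (3 fs) then show ?case by simp
next
  case (4 t ts fs)
  have a: "\<forall>x\<in>set (take (leaves t) fs). dary d x" using 4(4) by (meson in_set_takeD)
  have b: "\<forall>x\<in>set (drop (leaves t) fs). dary d x" using 4(4) by (meson in_set_dropD)
  have c: "dary d (graft t (take (leaves t) fs))" using 4(1)[OF _ a] 4(3,5) by simp
  have e: "\<forall>x\<in>set (gcomp ts (drop (leaves t) fs)). dary d x" using 4(2)[OF _ b] 4(3,5) by simp
  show ?case using c e by simp
qed

lemma graft_id:
  "fs = replicate (leaves t) Leaf \<Longrightarrow> graft t fs = t"
  "fs = replicate (lvs ts) Leaf \<Longrightarrow> gcomp ts fs = ts"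
proof (induction t fs and ts fs rule: graft_gcomp.induct)
  case (4 t ts fs)
  then show ?case by (simp add: take_replicate drop_replicate)
qed auto

lemma gcomp_append: "gcomp (xs @ ys) gs = gcomp xs (take (lvs xs) gs) @ gcomp ys (drop (lvs xs) gs)"
proof (induction xs arbitrary: gs)
  case (Cons x xs)
  have "take (leaves x) (take (leaves x + lvs xs) gs) = take (leaves x) gs" by simp
  moreover have "drop (leaves x) (take (leaves x + lvs xs) gs) = take (lvs xs) (drop (leaves x) gs)"
    by (simp add: drop_take)
  moreover have "drop (leaves x + lvs xs) gs = drop (lvs xs) (drop (leaves x) gs)" by (simp add: add.commute)
  ultimately show ?case using Cons by simp
qed simp

lemma gcomp_split: "gcomp fs gs = gcomp (take n fs) (take (lvs (take n fs)) gs) @ gcomp (drop n fs) (drop (lvs (take n fs)) gs)"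
  using gcomp_append[of "take n fs" "drop n fs" gs] by simp

lemma take_gcomp: "take n (gcomp fs gs) = gcomp (take n fs) (take (lvs (take n fs)) gs)"
proof (cases "n \<le> length fs")
  case True
  have "take n (gcomp (take n fs) (take (lvs (take n fs)) gs) @ gcomp (drop n fs) (drop (lvs (take n fs)) gs))
     = gcomp (take n fs) (take (lvs (take n fs)) gs)" using True by simp
  then show ?thesis using gcomp_split[of fs gs n] by simp
next
  case False
  have "take n (gcomp (take n fs) (take (lvs (take n fs)) gs) @ gcomp (drop n fs) (drop (lvs (take n fs)) gs))
     = gcomp (take n fs) (take (lvs (take n fs)) gs)" using False by simp
  then show ?thesis using gcomp_split[of fs gs n] by simp
qed

lemma drop_gcomp: "drop n (gcomp fs gs) = gcomp (drop n fs) (drop (lvs (take n fs)) gs)"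
proof (cases "n \<le> length fs")
  case True
  have "drop n (gcomp (take n fs) (take (lvs (take n fs)) gs) @ gcomp (drop n fs) (drop (lvs (take n fs)) gs))
     = gcomp (drop n fs) (drop (lvs (take n fs)) gs)" using True by simp
  then show ?thesis using gcomp_split[of fs gs n] by simp
next
  case False
  have "drop n (gcomp (take n fs) (take (lvs (take n fs)) gs) @ gcomp (drop n fs) (drop (lvs (take n fs)) gs))
     = gcomp (drop n fs) (drop (lvs (take n fs)) gs)" using False by simp
  then show ?thesis using gcomp_split[of fs gs n] by simp
qed

lemma graft_assoc:
  "length fs = leaves t \<Longrightarrow> length gs = lvs fs \<Longrightarrow> graft (graft t fs) gs = graft t (gcomp fs gs)"
  "length fs = lvs ts \<Longrightarrow> length gs = lvs fs \<Longrightarrow> gcomp (gcomp ts fs) gs = gcomp ts (gcomp fs gs)"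
proof (induction t fs and ts fs arbitrary: gs and gs rule: graft_gcomp.induct)
  case (1 fs) then show ?case by (cases fs) auto
next
  case (4 t ts fs)
  have l1: "length (take (leaves t) fs) = leaves t" using 4 by simp
  have l2: "length (drop (leaves t) fs) = lvs ts" using 4 by simp
  have e1: "leaves (graft t (take (leaves t) fs)) = lvs (take (leaves t) fs)"
    using leaves_graft(1)[OF l1] .
  show ?case
    using 4(1)[OF l1, of "take (lvs (take (leaves t) fs)) gs"]
      4(2)[OF l2, of "drop (lvs (take (leaves t) fs)) gs"] 4(4) lvs_split[of fs "leaves t"]
    by (simp add: e1 take_gcomp drop_gcomp)
qed auto


lemma graft_inj:
  "length fs = leaves t \<Longrightarrow> length gs = leaves t \<Longrightarrow> graft t fs = graft t gs \<Longrightarrow> fs = gs"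
  "length fs = lvs ts \<Longrightarrow> length gs = lvs ts \<Longrightarrow> gcomp ts fs = gcomp ts gs \<Longrightarrow> fs = gs"
proof (induction t fs and ts fs arbitrary: gs and gs rule: graft_gcomp.induct)
  case (1 fs)
  then obtain x y where "fs = [x]" "gs = [y]" by (metis One_nat_def leaves.simps(1) length_0_conv length_Suc_conv)
  then show ?case using 1 by simp
next
  case (2 ts fs) then show ?case by simp
next
  case (3 fs) then show ?case by simp
next
  case (4 t ts fs)
  have "take (leaves t) fs = take (leaves t) gs" using 4 by simp
  moreover have "drop (leaves t) fs = drop (leaves t) gs" using 4 by simp
  ultimately show ?case by (metis append_take_drop_id)
qed

lemma gcomp_rep: "length xs = i \<Longrightarrow> gcomp (replicate i Leaf) xs = xs"
proof (induction i arbitrary: xs)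
  case (Suc i) then show ?case by (cases xs) auto
qed auto

lemma leaves_caret[simp]: "leaves (caret d) = d"
  by (simp add: caret_def sum_list_replicate)

lemma dary_caret[simp]: "dary d (caret d)"
  by (simp add: caret_def)

lemma leaves_attach:
  "1 \<le> d \<Longrightarrow> 1 \<le> k \<Longrightarrow> k \<le> leaves t \<Longrightarrow> leaves (attach d k t) = leaves t + (d - 1)"
  "1 \<le> d \<Longrightarrow> 1 \<le> k \<Longrightarrow> k \<le> lvs ts \<Longrightarrow> lvs (attach_list d k ts) = lvs ts + (d - 1)"
proof (induction d k t and d k ts rule: attach_attach_list.induct)
  case (4 d k t ts)
  show ?case
  proof (cases "k \<le> leaves t")
    case True then show ?thesis using 4 by simp
  next
    case False then show ?thesis using 4 by simp
  qed
qed auto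

lemma length_attach_list[simp]: "length (attach_list d k ts) = length ts"
  by (induction ts arbitrary: k) auto

lemma dary_attach:
  "dary d t \<Longrightarrow> dary d (attach d k t)"
  "\<forall>x\<in>set ts. dary d x \<Longrightarrow> \<forall>x\<in>set (attach_list d k ts). dary d x"
  by (induction d k t and d k ts rule: attach_attach_list.induct) auto

lemma attach_comm:
  "1 \<le> d \<Longrightarrow> 1 \<le> k \<Longrightarrow> k < p \<Longrightarrow> p \<le> leaves t \<Longrightarrow>
     attach d k (attach d p t) = attach d (p + (d - 1)) (attach d k t)"
  "1 \<le> d \<Longrightarrow> 1 \<le> k \<Longrightarrow> k < p \<Longrightarrow> p \<le> lvs ts \<Longrightarrow>
     attach_list d k (attach_list d p ts) = attach_list d (p + (d - 1)) (attach_list d k ts)"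
proof (induction d k t and d k ts arbitrary: p and p rule: attach_attach_list.induct)
  case (4 d k t ts)
  show ?case
  proof (cases "p \<le> leaves t")
    case True
    then have kt: "k \<le> leaves t" using 4 by simp
    have l1: "leaves (attach d p t) = leaves t + (d - 1)" using leaves_attach(1)[of d p t] 4 True by simp
    have l2: "leaves (attach d k t) = leaves t + (d - 1)" using leaves_attach(1)[of d k t] 4 kt by simp
    have "attach d k (attach d p t) = attach d (p + (d - 1)) (attach d k t)"
      using 4(1)[OF kt, of p] 4(3-5) True by simp
    then show ?thesis using kt True l1 l2 by simp
  next
    case F: False
    show ?thesis
    proof (cases "k \<le> leaves t")
      case True
      have l2: "leaves (attach d k t) = leaves t + (d - 1)" using leaves_attach(1)[of d k t] 4 True by simp
      have "\<not> p + (d - 1) \<le> leaves (attach d k t)" using l2 F by simp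
      moreover have "p + (d - 1) - leaves (attach d k t) = p - leaves t" using l2 F by simp
      ultimately show ?thesis using True F by simp
    next
      case False
      have "attach_list d (k - leaves t) (attach_list d (p - leaves t) ts) =
            attach_list d (p - leaves t + (d - 1)) (attach_list d (k - leaves t) ts)"
        using 4(2)[OF False, of "p - leaves t"] 4(3-6) False F by simp
      moreover have "p - leaves t + (d - 1) = p + (d - 1) - leaves t" using F by simp
      ultimately show ?thesis using False F by simp
    qed
  qed
qed auto



lemma tk1: "length xs < n \<Longrightarrow> take n (xs @ y # zs) = xs @ y # take (n - Suc (length xs)) zs"
  by (simp add: take_Cons')
lemma dr1: "length xs < n \<Longrightarrow> drop n (xs @ y # zs) = drop (n - Suc (length xs)) zs"
  by (simp add: drop_Cons')

lemma attach_graft: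
  "1 \<le> k \<Longrightarrow> k \<le> leaves t \<Longrightarrow> attach d k t = graft t (replicate (k - 1) Leaf @ caret d # replicate (leaves t - k) Leaf)"
  "1 \<le> k \<Longrightarrow> k \<le> lvs ts \<Longrightarrow> attach_list d k ts = gcomp ts (replicate (k - 1) Leaf @ caret d # replicate (lvs ts - k) Leaf)"
proof (induction d k t and d k ts rule: attach_attach_list.induct)
  case (4 d k t ts)
  let ?E = "replicate (k - 1) Leaf @ caret d # replicate (leaves t + lvs ts - k) Leaf"
  show ?case
  proof (cases "k \<le> leaves t")
    case True
    have "take (leaves t) ?E = replicate (k - 1) Leaf @ caret d # replicate (leaves t - k) Leaf"
      using True 4(3) by (subst tk1) auto
    moreover have "drop (leaves t) ?E = replicate (lvs ts) Leaf"
      using True 4(3) by (subst dr1) auto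
    ultimately show ?thesis using True 4 graft_id(2)[of "replicate (lvs ts) Leaf" ts] by simp
  next
    case False
    have "take (leaves t) ?E = replicate (leaves t) Leaf"
      using False 4(3) by simp
    moreover have "drop (leaves t) ?E = replicate (k - leaves t - 1) Leaf @ caret d # replicate (lvs ts - (k - leaves t)) Leaf"
      using False 4(3) by (simp add: drop_Cons')
    ultimately show ?thesis using False 4 graft_id(1)[of "replicate (leaves t) Leaf" t] by simp
  qed
qed auto

abbreviation dforest :: "nat \<Rightarrow> tree list \<Rightarrow> bool" where
  "dforest d fs \<equiv> \<forall>x\<in>set fs. dary d x"

lemma graft_caret: "length ts = d \<Longrightarrow> graft (caret d) ts = Node ts"
  by (simp add: caret_def gcomp_rep)

lemma graft_decomp:
  assumes "i < length f" "length f = leaves X" "f ! i = Node ts" "length ts = d"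
  shows "graft X f = graft (attach d (Suc i) X) (take i f @ ts @ drop (Suc i) f)"
proof -
  let ?E = "replicate i Leaf @ caret d # replicate (leaves X - Suc i) Leaf"
  let ?f = "take i f @ ts @ drop (Suc i) f"
  have a: "attach d (Suc i) X = graft X ?E" using attach_graft(1)[of "Suc i" X d] assms by simp
  have le: "length ?E = leaves X" using assms by simp
  have lf: "length ?f = lvs ?E" using assms by (simp add: sum_list_replicate)
  have "graft (attach d (Suc i) X) ?f = graft X (gcomp ?E ?f)"
    using graft_assoc(1)[OF le lf] a by simp
  also have "gcomp ?E ?f = take i f @ Node ts # drop (Suc i) f"
  proof -
    have "gcomp ?E ?f = gcomp (replicate i Leaf) (take i ?f) @ gcomp (caret d # replicate (leaves X - Suc i) Leaf) (drop i ?f)"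
      using gcomp_append[of "replicate i Leaf" "caret d # replicate (leaves X - Suc i) Leaf" ?f]
      by (simp add: sum_list_replicate)
    also have "take i ?f = take i f" using assms by simp
    also have "drop i ?f = ts @ drop (Suc i) f" using assms by simp
    also have "gcomp (replicate i Leaf) (take i f) = take i f" using assms by (simp add: gcomp_rep)
    also have "gcomp (caret d # replicate (leaves X - Suc i) Leaf) (ts @ drop (Suc i) f) = Node ts # drop (Suc i) f"
      using assms by (simp add: graft_caret gcomp_rep)
    finally show ?thesis .
  qed
  also have "take i f @ Node ts # drop (Suc i) f = f" using assms by (metis id_take_nth_drop)
  finally show ?thesis by simp
qed



lemma join_list:
  assumes IH: "\<forall>s\<in>set ss. \<forall>u. dary d s \<longrightarrow> dary d u \<longrightarrow>
      (\<exists>a b. dforest d a \<and> dforest d b \<and> length a = leaves s \<and> length b = leaves u \<and> graft s a = graft u b)"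
    and "dforest d ss" "dforest d us" "length ss = length us"
  shows "\<exists>a b. dforest d a \<and> dforest d b \<and> length a = lvs ss \<and> length b = lvs us \<and> gcomp ss a = gcomp us b"
  using assms
proof (induction ss arbitrary: us)
  case Nil then show ?case by (rule_tac x="[]" in exI, rule_tac x="[]" in exI) simp
next
  case (Cons s ss)
  then obtain u us' where us: "us = u # us'" by (cases us) auto
  obtain a0 b0 where h0: "dforest d a0" "dforest d b0" "length a0 = leaves s" "length b0 = leaves u" "graft s a0 = graft u b0"
    using Cons.prems us by auto
  obtain a1 b1 where h1: "dforest d a1" "dforest d b1" "length a1 = lvs ss" "length b1 = lvs us'" "gcomp ss a1 = gcomp us' b1"
    using Cons.IH[of us'] Cons.prems us by auto
  show ?case
    apply (rule exI[of _ "a0 @ a1"], rule exI[of _ "b0 @ b1"])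
    using h0 h1 us by auto
qed

lemma join_ex:
  "dary d S \<Longrightarrow> dary d T \<Longrightarrow>
    \<exists>a b. dforest d a \<and> dforest d b \<and> length a = leaves S \<and> length b = leaves T \<and> graft S a = graft T b"
proof (induction S arbitrary: T)
  case Leaf
  show ?case
    apply (rule exI[of _ "[T]"], rule exI[of _ "replicate (leaves T) Leaf"])
    using Leaf graft_id(1)[of "replicate (leaves T) Leaf" T] by simp
next
  case (Node ss)
  show ?case
  proof (cases T)
    case Leaf
    show ?thesis
      apply (rule exI[of _ "replicate (leaves (Node ss)) Leaf"], rule exI[of _ "[Node ss]"])
      using Leaf Node.prems graft_id(1)[of "replicate (leaves (Node ss)) Leaf" "Node ss"] by simp
  next
    case (Node us)
    have "\<exists>a b. dforest d a \<and> dforest d b \<and> length a = lvs ss \<and> length b = lvs us \<and> gcomp ss a = gcomp us b"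
      apply (rule join_list)
      using Node.IH Node.prems Node by auto
    then show ?thesis using Node by simp
  qed
qed

definition Rel :: "nat \<Rightarrow> tree \<times> tree \<Rightarrow> tree \<times> tree \<Rightarrow> bool" where
  "Rel d p q = (valid_pair d p \<and> valid_pair d q \<and>
     (\<exists>f g. dforest d f \<and> dforest d g \<and> length f = leaves (fst p) \<and> length g = leaves (fst q) \<and>
        graft (fst p) f = graft (fst q) g \<and> graft (snd p) f = graft (snd q) g))"

lemma Rel_refl: "valid_pair d p \<Longrightarrow> Rel d p p"
  unfolding Rel_def
  by (rule conjI, simp, rule conjI, simp, rule exI[of _ "replicate (leaves (fst p)) Leaf"],
      rule exI[of _ "replicate (leaves (fst p)) Leaf"]) (simp add: valid_pair_def)

lemma Rel_sym: "Rel d p q \<Longrightarrow> Rel d q p"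
proof -
  assume "Rel d p q"
  then obtain f g where "valid_pair d p" "valid_pair d q" "dforest d f" "dforest d g" "length f = leaves (fst p)"
     "length g = leaves (fst q)" "graft (fst p) f = graft (fst q) g" "graft (snd p) f = graft (snd q) g"
    unfolding Rel_def by blast
  then show ?thesis unfolding Rel_def by (intro conjI exI[of _ g] exI[of _ f]) auto
qed

lemma valid_graft:
  assumes "valid_pair d (X, Y)" "dforest d f" "length f = leaves X"
  shows "valid_pair d (graft X f, graft Y f)"
  using assms dary_graft(1)[of d X f] dary_graft(1)[of d Y f] leaves_graft(1)[of f X] leaves_graft(1)[of f Y]
  by (simp add: valid_pair_def)

lemma RelI:
  assumes "valid_pair d (X, Y)" "valid_pair d (X', Y')" "dforest d f" "dforest d g"
    "length f = leaves X" "length g = leaves X'" "graft X f = graft X' g" "graft Y f = graft Y' g"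
  shows "Rel d (X, Y) (X', Y')"
  unfolding Rel_def fst_conv snd_conv using assms by blast

lemma RelE:
  assumes "Rel d (X, Y) (X', Y')"
  obtains f g where "valid_pair d (X, Y)" "valid_pair d (X', Y')" "dforest d f" "dforest d g"
    "length f = leaves X" "length g = leaves X'" "graft X f = graft X' g" "graft Y f = graft Y' g"
  using assms unfolding Rel_def fst_conv snd_conv by blast

lemma vp: "valid_pair d (X, Y) \<Longrightarrow> dary d X \<and> dary d Y \<and> leaves Y = leaves X"
  by (simp add: valid_pair_def)

lemma assoc_eq:
  assumes "length f = leaves X" "length a = lvs f"
  shows "graft (graft X f) a = graft X (gcomp f a)"
  using graft_assoc(1)[OF assms] .

lemma Rel_trans0:
  assumes "Rel d (X, Y) (X', Y')" "Rel d (X', Y') (X'', Y'')" shows "Rel d (X, Y) (X'', Y'')"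
proof -
  obtain f g where fg: "valid_pair d (X, Y)" "valid_pair d (X', Y')" "dforest d f" "dforest d g" "length f = leaves X" "length g = leaves X'"
     "graft X f = graft X' g" "graft Y f = graft Y' g" using RelE[OF assms(1)] by metis
  obtain g' h where gh: "valid_pair d (X'', Y'')" "dforest d g'" "dforest d h" "length g' = leaves X'" "length h = leaves X''"
     "graft X' g' = graft X'' h" "graft Y' g' = graft Y'' h" using RelE[OF assms(2)] by metis
  have v1: "dary d X" "dary d Y" "leaves Y = leaves X" using vp[OF fg(1)] by auto
  have v2: "dary d X'" "dary d Y'" "leaves Y' = leaves X'" using vp[OF fg(2)] by auto
  have v3: "dary d X''" "dary d Y''" "leaves Y'' = leaves X''" using vp[OF gh(1)] by auto
  have d1: "dary d (graft X' g)" using dary_graft(1)[OF v2(1) fg(4) fg(6)] .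
  have d2: "dary d (graft X' g')" using dary_graft(1)[OF v2(1) gh(2) gh(4)] .
  obtain a b where ab: "dforest d a" "dforest d b" "length a = leaves (graft X' g)" "length b = leaves (graft X' g')"
     "graft (graft X' g) a = graft (graft X' g') b" using join_ex[OF d1 d2] by blast
  have lg: "leaves (graft X' g) = lvs g" using leaves_graft(1)[OF fg(6)] .
  have lf: "leaves (graft X f) = lvs f" using leaves_graft(1)[OF fg(5)] .
  have lg': "leaves (graft X' g') = lvs g'" using leaves_graft(1)[OF gh(4)] .
  have lh: "leaves (graft X'' h) = lvs h" using leaves_graft(1)[OF gh(5)] .
  have la: "length a = lvs g" "length a = lvs f" using ab(3) lg lf fg(7) by auto
  have lb: "length b = lvs g'" "length b = lvs h" using ab(4) lg' lh gh(6) by auto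
  have "graft X' (gcomp g a) = graft X' (gcomp g' b)"
    using ab(5) assoc_eq[OF fg(6) la(1)] assoc_eq[OF gh(4) lb(1)] by simp
  then have gg: "gcomp g a = gcomp g' b" using graft_inj(1)[of "gcomp g a" X' "gcomp g' b"] fg(6) gh(4) by simp
  have e1: "graft X (gcomp f a) = graft X'' (gcomp h b)"
    using ab(5) assoc_eq[OF fg(5) la(2)] assoc_eq[OF gh(5) lb(2)] fg(7) gh(6) by simp
  have fY: "length f = leaves Y" using fg(5) v1(3) by simp
  have gY: "length g = leaves Y'" using fg(6) v2(3) by simp
  have gY': "length g' = leaves Y'" using gh(4) v2(3) by simp
  have hY: "length h = leaves Y''" using gh(5) v3(3) by simp
  have "graft Y (gcomp f a) = graft (graft Y f) a" using assoc_eq[OF fY la(2)] by simp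
  also have "\<dots> = graft Y' (gcomp g a)" using fg(8) assoc_eq[OF gY la(1)] by simp
  also have "\<dots> = graft (graft Y' g') b" using gg assoc_eq[OF gY' lb(1)] by simp
  also have "\<dots> = graft Y'' (gcomp h b)" using gh(7) assoc_eq[OF hY lb(2)] by simp
  finally have e2: "graft Y (gcomp f a) = graft Y'' (gcomp h b)" .
  have df: "dforest d (gcomp f a)" using dary_graft(2)[OF fg(3) ab(1)] la(2) by simp
  have dh: "dforest d (gcomp h b)" using dary_graft(2)[OF gh(3) ab(2)] lb(2) by simp
  show ?thesis
    by (rule RelI[OF fg(1) gh(1) df dh _ _ e1 e2]) (simp_all add: fg(5) gh(5))
qed

lemma Rel_trans: "Rel d p q \<Longrightarrow> Rel d q r \<Longrightarrow> Rel d p r"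
  using Rel_trans0[of d "fst p" "snd p" "fst q" "snd q" "fst r" "snd r"] by simp

lemma Rel_mult:
  assumes "Rel d (T', U') (X, Y)" "Rel d (U', W') (Y, Z)" shows "Rel d (T', W') (X, Z)"
proof -
  obtain f1 g1 where h1: "valid_pair d (T', U')" "valid_pair d (X, Y)" "dforest d f1" "dforest d g1" "length f1 = leaves T'" "length g1 = leaves X"
     "graft T' f1 = graft X g1" "graft U' f1 = graft Y g1" using RelE[OF assms(1)] by metis
  obtain f2 g2 where h2: "valid_pair d (U', W')" "valid_pair d (Y, Z)" "dforest d f2" "dforest d g2" "length f2 = leaves U'" "length g2 = leaves Y"
     "graft U' f2 = graft Y g2" "graft W' f2 = graft Z g2" using RelE[OF assms(2)] by metis
  have v1: "dary d T'" "dary d U'" "leaves U' = leaves T'" using vp[OF h1(1)] by auto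
  have v2: "dary d X" "dary d Y" "leaves Y = leaves X" using vp[OF h1(2)] by auto
  have v3: "dary d W'" "leaves W' = leaves U'" using vp[OF h2(1)] by auto
  have v4: "dary d Z" "leaves Z = leaves Y" using vp[OF h2(2)] by auto
  have f1U: "length f1 = leaves U'" using h1(5) v1(3) by simp
  have g1Y: "length g1 = leaves Y" using h1(6) v2(3) by simp
  have f2W: "length f2 = leaves W'" using h2(5) v3(2) by simp
  have g2Z: "length g2 = leaves Z" using h2(6) v4(2) by simp
  have d1: "dary d (graft U' f1)" using dary_graft(1)[OF v1(2) h1(3) f1U] .
  have d2: "dary d (graft U' f2)" using dary_graft(1)[OF v1(2) h2(3) h2(5)] .
  obtain a b where ab: "dforest d a" "dforest d b" "length a = leaves (graft U' f1)" "length b = leaves (graft U' f2)"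
     "graft (graft U' f1) a = graft (graft U' f2) b" using join_ex[OF d1 d2] by blast
  have la: "length a = lvs f1" "length a = lvs g1"
    using ab(3) leaves_graft(1)[OF f1U] leaves_graft(1)[OF g1Y] h1(8) by auto
  have lb: "length b = lvs f2" "length b = lvs g2"
    using ab(4) leaves_graft(1)[OF h2(5)] leaves_graft(1)[OF h2(6)] h2(7) by auto
  have "graft U' (gcomp f1 a) = graft U' (gcomp f2 b)"
    using ab(5) assoc_eq[OF f1U la(1)] assoc_eq[OF h2(5) lb(1)] by simp
  then have ff: "gcomp f1 a = gcomp f2 b" using graft_inj(1)[of "gcomp f1 a" U' "gcomp f2 b"] f1U h2(5) by simp
  have "graft Y (gcomp g1 a) = graft Y (gcomp g2 b)"
    using ab(5) h1(8) h2(7) assoc_eq[OF g1Y la(2)] assoc_eq[OF h2(6) lb(2)] by simp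
  then have gg: "gcomp g1 a = gcomp g2 b" using graft_inj(1)[of "gcomp g1 a" Y "gcomp g2 b"] g1Y h2(6) by simp
  have e1: "graft T' (gcomp f1 a) = graft X (gcomp g1 a)"
    using h1(7) assoc_eq[OF h1(5) la(1)] assoc_eq[OF h1(6) la(2)] by simp
  have "graft W' (gcomp f1 a) = graft (graft W' f2) b" using ff assoc_eq[OF f2W lb(1)] by simp
  also have "\<dots> = graft Z (gcomp g2 b)" using h2(8) assoc_eq[OF g2Z lb(2)] by simp
  finally have e2: "graft W' (gcomp f1 a) = graft Z (gcomp g1 a)" using gg by simp
  have df: "dforest d (gcomp f1 a)" using dary_graft(2)[OF h1(3) ab(1)] la(1) by simp
  have dg: "dforest d (gcomp g1 a)" using dary_graft(2)[OF h1(4) ab(1)] la(2) by simp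
  have vv: "valid_pair d (T', W')" "valid_pair d (X, Z)" using v1 v2 v3 v4 by (auto simp: valid_pair_def)
  show ?thesis
    by (rule RelI[OF vv df dg _ _ e1 e2]) (simp_all add: h1(5) h1(6))
qed



lemma Rel_attach:
  assumes "valid_pair d (X, Y)" "1 \<le> d" "1 \<le> k" "k \<le> leaves X"
  shows "Rel d (X, Y) (attach d k X, attach d k Y)"
proof -
  let ?E = "replicate (k - 1) Leaf @ caret d # replicate (leaves X - k) Leaf"
  let ?g = "replicate (leaves X + (d - 1)) Leaf"
  have v: "dary d X" "dary d Y" "leaves Y = leaves X" using vp[OF assms(1)] by auto
  have a1: "attach d k X = graft X ?E" using attach_graft(1)[of k X d] assms by simp
  have a2: "attach d k Y = graft Y ?E" using attach_graft(1)[of k Y d] assms v by simp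
  have lX: "leaves (attach d k X) = leaves X + (d - 1)" using leaves_attach(1)[of d k X] assms by simp
  have lY: "leaves (attach d k Y) = leaves X + (d - 1)" using leaves_attach(1)[of d k Y] assms v by simp
  have vv: "valid_pair d (attach d k X, attach d k Y)"
    using lX lY dary_attach(1)[OF v(1)] dary_attach(1)[OF v(2)] by (simp add: valid_pair_def)
  have gX: "graft (attach d k X) ?g = attach d k X" using graft_id(1)[OF refl, of "attach d k X"] lX by simp
  have gY: "graft (attach d k Y) ?g = attach d k Y" using graft_id(1)[OF refl, of "attach d k Y"] lY by simp
  show ?thesis
    apply (rule RelI[OF assms(1) vv, of ?E ?g])
    using assms lX gX gY a1 a2 by auto
qed

lemma expand_Rel: "1 \<le> d \<Longrightarrow> expand d p q \<Longrightarrow> Rel d p q"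
  unfolding expand_def using Rel_attach[of d "fst p" "snd p"] by auto

lemma fd_equiv_Rel: "1 \<le> d \<Longrightarrow> fd_equiv d p q \<Longrightarrow> Rel d p q"
  unfolding fd_equiv_def
proof (elim conjE)
  assume d: "1 \<le> d" and v: "valid_pair d p" and r: "(\<lambda>x y. expand d x y \<or> expand d y x)\<^sup>*\<^sup>* p q"
  from r show "Rel d p q"
  proof (induction rule: rtranclp_induct)
    case base then show ?case using Rel_refl[OF v] .
  next
    case (step y z)
    then show ?case using expand_Rel[OF d] Rel_sym Rel_trans by blast
  qed
qed

lemma size_node: "sum_list (map size ts) < size (Node ts)"
  by (simp add: size_list_conv_sum_list)

lemma graft_expands:
  "1 \<le> d \<Longrightarrow> valid_pair d (X, Y) \<Longrightarrow> dforest d f \<Longrightarrow> length f = leaves X \<Longrightarrow>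
     (expand d)\<^sup>*\<^sup>* (X, Y) (graft X f, graft Y f)"
proof (induction "sum_list (map size f)" arbitrary: X Y f rule: less_induct)
  case less
  have v: "dary d X" "dary d Y" "leaves Y = leaves X" using vp[OF less.prems(2)] by auto
  show ?case
  proof (cases "\<forall>x\<in>set f. x = Leaf")
    case True
    then have "f = replicate (length f) Leaf" by (simp add: replicate_length_same)
    then have "graft X f = X" "graft Y f = Y" using graft_id(1) less.prems(4) v(3) by metis+
    then show ?thesis by simp
  next
    case False
    then obtain i where i: "i < length f" "f ! i \<noteq> Leaf" by (metis in_set_conv_nth)
    then obtain ts where ts: "f ! i = Node ts" by (cases "f ! i") auto
    have "dary d (f ! i)" using i less.prems(3) by simp
    then have lts: "length ts = d" and dts: "dforest d ts" using ts by auto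
    let ?X = "attach d (Suc i) X" and ?Y = "attach d (Suc i) Y"
    let ?f = "take i f @ ts @ drop (Suc i) f"
    have si: "Suc i \<le> leaves X" "1 \<le> Suc i" using i less.prems(4) by simp_all
    have e: "expand d (X, Y) (?X, ?Y)" unfolding expand_def fst_conv snd_conv
      using less.prems(2) si by blast
    have vv: "valid_pair d (?X, ?Y)"
      using Rel_attach[OF less.prems(2) less.prems(1), of "Suc i"] i less.prems(4) unfolding Rel_def by simp
    have lX: "leaves ?X = leaves X + (d - 1)" using leaves_attach(1)[of d "Suc i" X] less.prems i by simp
    have lf: "length ?f = leaves ?X" using lX i lts less.prems(4) less.prems(1) by simp
    have df: "dforest d ?f" using less.prems(3) dts by (auto dest: in_set_takeD in_set_dropD)
    have w: "sum_list (map size ?f) < sum_list (map size f)"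
    proof -
      have "sum_list (map size f) = sum_list (map size (take i f)) + size (f ! i) + sum_list (map size (drop (Suc i) f))"
        using i(1) by (subst id_take_nth_drop[OF i(1)]) simp
      then show ?thesis using size_node[of ts] ts by simp
    qed
    have g1: "graft X f = graft ?X ?f" using graft_decomp[OF i(1) less.prems(4) ts lts] .
    have g2: "graft Y f = graft ?Y ?f" using graft_decomp[OF i(1) _ ts lts] less.prems(4) v(3) by simp
    have "(expand d)\<^sup>*\<^sup>* (?X, ?Y) (graft ?X ?f, graft ?Y ?f)"
      using less.hyps[OF w less.prems(1) vv df lf] .
    then show ?thesis using e g1 g2 by (simp add: converse_rtranclp_into_rtranclp)
  qed
qed

lemma rtc_sym1: "r\<^sup>*\<^sup>* x y \<Longrightarrow> (\<lambda>x y. r x y \<or> r y x)\<^sup>*\<^sup>* x y"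
  by (induction rule: rtranclp_induct) (auto intro: rtranclp.rtrancl_into_rtrancl)

lemma rtc_sym2: "r\<^sup>*\<^sup>* x y \<Longrightarrow> (\<lambda>x y. r x y \<or> r y x)\<^sup>*\<^sup>* y x"
  by (induction rule: rtranclp_induct) (auto intro: converse_rtranclp_into_rtranclp)

lemma Rel_fd_equiv:
  assumes d: "1 \<le> d" and r: "Rel d p q" shows "fd_equiv d p q"
proof -
  obtain X Y X' Y' where pq: "p = (X, Y)" "q = (X', Y')" by (cases p, cases q) auto
  obtain f g where fg: "valid_pair d (X, Y)" "valid_pair d (X', Y')" "dforest d f" "dforest d g" "length f = leaves X" "length g = leaves X'"
     "graft X f = graft X' g" "graft Y f = graft Y' g" using RelE r pq by metis
  have a: "(expand d)\<^sup>*\<^sup>* (X, Y) (graft X f, graft Y f)" using graft_expands[OF d fg(1) fg(3) fg(5)] .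
  have b: "(expand d)\<^sup>*\<^sup>* (X', Y') (graft X f, graft Y f)"
    using graft_expands[OF d fg(2) fg(4) fg(6)] fg(7,8) by simp
  have "(\<lambda>x y. expand d x y \<or> expand d y x)\<^sup>*\<^sup>* (X, Y) (X', Y')"
    by (rule rtranclp_trans[OF rtc_sym1[OF a] rtc_sym2[OF b]])
  then show ?thesis unfolding fd_equiv_def using fg(1) pq by simp
qed

lemma fd_mult_Rel:
  assumes d: "1 \<le> d" and "Rel d p (X, Y)" "Rel d q (Y, Z)"
  shows "Rel d (fd_mult d p q) (X, Z)"
proof -
  let ?P = "\<lambda>r. \<exists>T U W. fd_equiv d p (T, U) \<and> fd_equiv d q (U, W) \<and> r = (T, W)"
  have "?P (X, Z)" using Rel_fd_equiv[OF d assms(2)] Rel_fd_equiv[OF d assms(3)] by blast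
  then have "?P (fd_mult d p q)" unfolding fd_mult_def by (rule someI)
  then obtain T U W where h: "fd_equiv d p (T, U)" "fd_equiv d q (U, W)" "fd_mult d p q = (T, W)" by blast
  have "Rel d (T, U) (X, Y)" using fd_equiv_Rel[OF d h(1)] assms(2) Rel_sym Rel_trans by blast
  moreover have "Rel d (U, W) (Y, Z)" using fd_equiv_Rel[OF d h(2)] assms(3) Rel_sym Rel_trans by blast
  ultimately show ?thesis using Rel_mult h(3) by simp
qed



lemma B_props:
  assumes "1 \<le> d" "dary d T" "leaves T = n" "1 \<le> l" "l \<le> n"
  shows "dary d (B_iter d l T j) \<and> leaves (B_iter d l T j) = n + j * (d - 1) \<and>
         B_iter d l T (Suc j) = attach d (l + j * (d - 1)) (B_iter d l T j)"
proof (induction j)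
  case 0 then show ?case using assms by simp
next
  case (Suc j)
  have le: "l + j * (d - 1) \<le> leaves (B_iter d l T j)" using Suc assms by simp
  have "leaves (B_iter d l T (Suc j)) = n + j * (d - 1) + (d - 1)"
    using Suc leaves_attach(1)[OF assms(1) _ le] assms(4) by simp
  moreover have "dary d (B_iter d l T (Suc j))" using Suc dary_attach(1) by simp
  ultimately show ?case by simp
qed

lemma A_props:
  assumes "1 \<le> d" "dary d T" "leaves T = n" "1 \<le> k" "k \<le> n"
  shows "dary d (A_iter d k T m) \<and> leaves (A_iter d k T m) = n + m * (d - 1) \<and>
         A_iter d k T (Suc m) = attach d k (A_iter d k T m)"
proof (induction m)
  case 0 then show ?case using assms by (simp add: A_iter_def)
next
  case (Suc m)
  have le: "k \<le> leaves (A_iter d k T m)" using Suc assms by simp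
  have "leaves (A_iter d k T (Suc m)) = n + m * (d - 1) + (d - 1)"
    using Suc leaves_attach(1)[OF assms(1) assms(4) le] by simp
  moreover have "dary d (A_iter d k T (Suc m))" using Suc dary_attach(1) by simp
  ultimately show ?case by (simp add: A_iter_def)
qed

lemma chain:
  assumes d: "1 \<le> d" and T: "dary d T" "leaves T = n" and kl: "1 \<le> k" "k < l" "l \<le> n"
  shows "Rel d (attach d k T, attach d l T) (attach d k (B_iter d l T j), B_iter d l T (Suc j))"
proof (induction j)
  case 0
  have "valid_pair d (attach d k T, attach d l T)"
    using leaves_attach(1)[OF d kl(1), of T] leaves_attach(1)[OF d _ kl(3)[unfolded T(2)[symmetric]]] kl
      dary_attach(1)[OF T(1)] T by (simp add: valid_pair_def)
  then show ?case using Rel_refl by simp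
next
  case (Suc j)
  note B = B_props[OF d T kl(1)[THEN order.trans, OF less_imp_le[OF kl(2)]] kl(3)]
  let ?Bj = "B_iter d l T j"
  let ?p = "l + j * (d - 1)"
  have Bj: "dary d ?Bj" "leaves ?Bj = n + j * (d - 1)" "B_iter d l T (Suc j) = attach d ?p ?Bj"
    using B[of j] by auto
  have BS: "B_iter d l T (Suc (Suc j)) = attach d (l + Suc j * (d - 1)) (B_iter d l T (Suc j))"
    using B[of "Suc j"] by auto
  have kp: "k < ?p" "?p \<le> leaves ?Bj" using kl Bj(2) by auto
  have comm: "attach d k (attach d ?p ?Bj) = attach d (?p + (d - 1)) (attach d k ?Bj)"
    using attach_comm(1)[OF d kl(1) kp] .
  have pe: "?p + (d - 1) = l + Suc j * (d - 1)" by simp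
  have v: "valid_pair d (attach d k ?Bj, B_iter d l T (Suc j))" using Suc unfolding Rel_def by simp
  have lk: "leaves (attach d k ?Bj) = n + j * (d - 1) + (d - 1)"
    using leaves_attach(1)[OF d kl(1)] kp Bj(2) by simp
  have r: "Rel d (attach d k ?Bj, B_iter d l T (Suc j))
     (attach d (l + Suc j * (d - 1)) (attach d k ?Bj), attach d (l + Suc j * (d - 1)) (B_iter d l T (Suc j)))"
    apply (rule Rel_attach[OF v d])
    using kl lk by auto
  have "attach d (l + Suc j * (d - 1)) (attach d k ?Bj) = attach d (?p + (d - 1)) (attach d k ?Bj)"
    by (simp only: pe)
  also have "\<dots> = attach d k (attach d ?p ?Bj)" using comm by (rule sym)
  also have "\<dots> = attach d k (B_iter d l T (Suc j))" using Bj(3) by (simp only:)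
  finally show ?case using Rel_trans[OF Suc r] BS by simp
qed

theorem mainTheorem7:
  fixes d n k l m :: nat and T :: tree
  assumes "d \<ge> 2" and "dary d T" and "leaves T = n"
    and "1 \<le> k" and "k < l" and "l \<le> n" and "m \<ge> 1"
  shows "fd_equiv d (fd_pow d (attach d k T, attach d l T) m)
                    (A_iter d k T m, B_iter d l T m)"
proof -
  have d: "1 \<le> d" using assms(1) by simp
  let ?P = "(attach d k T, attach d l T)"
  note A = A_props[OF d assms(2,3,4)] and B = B_props[OF d assms(2,3)]
  have kn: "k \<le> n" "1 \<le> l" using assms by auto
  have vP: "valid_pair d ?P" using chain[OF d assms(2,3,4,5,6), of 0] unfolding Rel_def by simp
  have key: "Rel d (fd_pow d ?P (Suc j)) (A_iter d k T (Suc j), B_iter d l T (Suc j))" for j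
  proof (induction j)
    case 0
    have A1: "A_iter d k T 1 = attach d k T" by (simp add: A_iter_def)
    have B1: "B_iter d l T 1 = attach d l T" by simp
    have lk: "leaves (attach d k T) = n + (d - 1)" using leaves_attach(1)[OF d assms(4)] kn assms(3) by simp
    have dk: "dary d (attach d k T)" using dary_attach(1)[OF assms(2)] .
    have r0: "Rel d (Leaf, Leaf) (attach d k T, attach d k T)"
      apply (rule RelI[of d Leaf Leaf "attach d k T" "attach d k T" "[attach d k T]" "replicate (leaves (attach d k T)) Leaf"])
      using dk graft_id(1)[OF refl, of "attach d k T"] by (auto simp: valid_pair_def)
    have "Rel d (fd_mult d (Leaf, Leaf) ?P) (attach d k T, attach d l T)"
      using fd_mult_Rel[OF d r0 Rel_refl[OF vP]] .
    then show ?case using A1 B1 by simp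
  next
    case (Suc j)
    have AS: "A_iter d k T (Suc (Suc j)) = attach d k (A_iter d k T (Suc j))" using A[OF kn(1), of "Suc j"] by simp
    have lA: "leaves (A_iter d k T (Suc j)) = n + Suc j * (d - 1)" using A[OF kn(1), of "Suc j"] by simp
    have v: "valid_pair d (A_iter d k T (Suc j), B_iter d l T (Suc j))" using Suc unfolding Rel_def by simp
    have r1: "Rel d (A_iter d k T (Suc j), B_iter d l T (Suc j))
                (A_iter d k T (Suc (Suc j)), attach d k (B_iter d l T (Suc j)))"
      unfolding AS by (rule Rel_attach[OF v d assms(4)]) (use lA kn in simp)
    have r2: "Rel d (fd_pow d ?P (Suc j)) (A_iter d k T (Suc (Suc j)), attach d k (B_iter d l T (Suc j)))"
      using Rel_trans[OF Suc r1] .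
    have r3: "Rel d ?P (attach d k (B_iter d l T (Suc j)), B_iter d l T (Suc (Suc j)))"
      using chain[OF d assms(2,3,4,5,6)] .
    show ?case using fd_mult_Rel[OF d r2 r3] by simp
  qed
  obtain j where "m = Suc j" using assms(7) by (cases m) auto
  then show ?thesis using Rel_fd_equiv[OF d key[of j]] by simp
qed


end
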